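(* Assume the structure is rigid. Fix $\zeta=(\xi,\eta)\in\Omega$ and let $Z(z,\zeta):=(y-\eta)-i(z)(x-\xi)$. Then $Z(\cdot,\zeta)$ is invertible in each fiber $A_z$, $z\neq\zeta$, the section $z\mapsto Z(z,\zeta)^{-1}$ is $C^1$ on $\Omega\setminus\{\zeta\}$, and \[ \partial_{\bar z}\bigl(Z(\cdot,\zeta)^{-1}\bigr)=0\quad\text{on }\Omega\setminus\{\zeta\}. \]
   Context: Let $\Omega\subset\mathbb R^2$ be open with coordinates $(x,y)$, and let $\alpha,\beta\in C^1(\Omega,\mathbb R)$ satisfy $\Delta:=4\alpha-\beta^2>0$ on $\Omega$. For $z\in\Omega$ let $A_z:=\mathbb R[X]/(X^2+\beta(z)X+\alpha(z))$ (a commutative real algebra) and let $i=i(z)$ denote the class of $X$, so $i^2+\beta i+\alpha=0$ and $\{1,i(z)\}$ is a real basis of $A_z$. An ($A$-valued) section is $f=u+v\,i$ with $u,v:\Omega\to\mathbb R$; it is $C^k$ if $u,v$ are, and sums/products of sections are taken fiberwise. In each fiber $2i+\beta$ is invertible with $(2i+\beta)^{-1}=(-\beta-2i)/\Delta$. The derivatives of the generator are the sections $i_x:=-(\alpha_x+\beta_x i)(2i+\beta)^{-1}$ and $i_y:=-(\alpha_y+\beta_y i)(2i+\beta)^{-1}$. For a $C^1$ section $f=u+vi$ set $\partial_x f:=u_x+v_x i+v\,i_x$, $\partial_y f:=u_y+v_y i+v\,i_y$, $\partial_{\bar z}f:=\tfrac12(\partial_x f+i\,\partial_y f)$. The structure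 is called rigid if $i_x+i\,i_y=0$ on $\Omega$. *)

theory Defs
  imports "HOL-Analysis.Analysis"
begin

text \<open>An element u + v i of the fiber algebra A_z = R[X]/(X^2 + beta X + alpha)
  is represented by the pair (u,v); a section is a function real \<times> real \<Rightarrow> real \<times> real.\<close>

definition pdx :: "(real \<times> real \<Rightarrow> real) \<Rightarrow> real \<times> real \<Rightarrow> real" where
  "pdx u z = frechet_derivative u (at z) (1, 0)"

definition pdy :: "(real \<times> real \<Rightarrow> real) \<Rightarrow> real \<times> real \<Rightarrow> real" where
  "pdy u z = frechet_derivative u (at z) (0, 1)"

definition C1_on :: "(real \<times> real) set \<Rightarrow> (real \<times> real \<Rightarrow> real) \<Rightarrow> bool" where
  "C1_on S u \<longleftrightarrow> (\<forall>z\<in>S. u differentiable (at z))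
      \<and> continuous_on S (pdx u) \<and> continuous_on S (pdy u)"

definition C1_section_on :: "(real \<times> real) set \<Rightarrow> (real \<times> real \<Rightarrow> real \<times> real) \<Rightarrow> bool" where
  "C1_section_on S f \<longleftrightarrow> C1_on S (\<lambda>z. fst (f z)) \<and> C1_on S (\<lambda>z. snd (f z))"

text \<open>Multiplication in R[X]/(X^2 + b X + a): (p + q i)(r + s i) with i^2 = - b i - a.\<close>
definition amul :: "real \<Rightarrow> real \<Rightarrow> real \<times> real \<Rightarrow> real \<times> real \<Rightarrow> real \<times> real" where
  "amul a b w1 w2 = (case w1 of (p, q) \<Rightarrow> case w2 of (r, s) \<Rightarrow>
       (p * r - a * q * s, p * s + q * r - b * q * s))"

definition ainvertible :: "real \<Rightarrow> real \<Rightarrow> real \<times> real \<Rightarrow> bool" where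
  "ainvertible a b w \<longleftrightarrow> (\<exists>w'. amul a b w w' = (1, 0))"

definition ainv :: "real \<Rightarrow> real \<Rightarrow> real \<times> real \<Rightarrow> real \<times> real" where
  "ainv a b w = (THE w'. amul a b w w' = (1, 0))"

text \<open>(2i + beta)^{-1} = (-beta - 2 i)/Delta, Delta = 4 alpha - beta^2.\<close>
definition inv2ib :: "(real \<times> real \<Rightarrow> real) \<Rightarrow> (real \<times> real \<Rightarrow> real) \<Rightarrow> real \<times> real \<Rightarrow> real \<times> real" where
  "inv2ib \<alpha> \<beta> z = (- \<beta> z / (4 * \<alpha> z - (\<beta> z)^2), - 2 / (4 * \<alpha> z - (\<beta> z)^2))"

text \<open>i_x = -(alpha_x + beta_x i)(2i+beta)^{-1}, i_y likewise.\<close>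
definition gen_x :: "(real \<times> real \<Rightarrow> real) \<Rightarrow> (real \<times> real \<Rightarrow> real) \<Rightarrow> real \<times> real \<Rightarrow> real \<times> real" where
  "gen_x \<alpha> \<beta> z = - amul (\<alpha> z) (\<beta> z) (pdx \<alpha> z, pdx \<beta> z) (inv2ib \<alpha> \<beta> z)"

definition gen_y :: "(real \<times> real \<Rightarrow> real) \<Rightarrow> (real \<times> real \<Rightarrow> real) \<Rightarrow> real \<times> real \<Rightarrow> real \<times> real" where
  "gen_y \<alpha> \<beta> z = - amul (\<alpha> z) (\<beta> z) (pdy \<alpha> z, pdy \<beta> z) (inv2ib \<alpha> \<beta> z)"

text \<open>partial_x f = u_x + v_x i + v i_x, similarly partial_y.\<close>
definition sdx :: "(real \<times> real \<Rightarrow> real) \<Rightarrow> (real \<times> real \<Rightarrow> real) \<Rightarrow> (real \<times> real \<Rightarrow> real \<times> real) \<Rightarrow> real \<times> real \<Rightarrow> real \<times> real" where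
  "sdx \<alpha> \<beta> f z = (pdx (\<lambda>w. fst (f w)) z, pdx (\<lambda>w. snd (f w)) z) + snd (f z) *\<^sub>R gen_x \<alpha> \<beta> z"

definition sdy :: "(real \<times> real \<Rightarrow> real) \<Rightarrow> (real \<times> real \<Rightarrow> real) \<Rightarrow> (real \<times> real \<Rightarrow> real \<times> real) \<Rightarrow> real \<times> real \<Rightarrow> real \<times> real" where
  "sdy \<alpha> \<beta> f z = (pdy (\<lambda>w. fst (f w)) z, pdy (\<lambda>w. snd (f w)) z) + snd (f z) *\<^sub>R gen_y \<alpha> \<beta> z"

definition sdzbar :: "(real \<times> real \<Rightarrow> real) \<Rightarrow> (real \<times> real \<Rightarrow> real) \<Rightarrow> (real \<times> real \<Rightarrow> real \<times> real) \<Rightarrow> real \<times> real \<Rightarrow> real \<times> real" where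
  "sdzbar \<alpha> \<beta> f z = (1/2) *\<^sub>R (sdx \<alpha> \<beta> f z + amul (\<alpha> z) (\<beta> z) (0, 1) (sdy \<alpha> \<beta> f z))"

definition rigid :: "(real \<times> real) set \<Rightarrow> (real \<times> real \<Rightarrow> real) \<Rightarrow> (real \<times> real \<Rightarrow> real) \<Rightarrow> bool" where
  "rigid \<Omega> \<alpha> \<beta> \<longleftrightarrow> (\<forall>z\<in>\<Omega>. gen_x \<alpha> \<beta> z + amul (\<alpha> z) (\<beta> z) (0, 1) (gen_y \<alpha> \<beta> z) = 0)"

definition Zker :: "real \<times> real \<Rightarrow> real \<times> real \<Rightarrow> real \<times> real" where
  "Zker \<zeta> z = (snd z - snd \<zeta>, - (fst z - fst \<zeta>))"

end

theory Submission imports Defs begin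
lemma amul_comm: "amul a b u v = amul a b v u"
  by (cases u; cases v) (simp add: amul_def algebra_simps)
lemma amul_assoc: "amul a b (amul a b u v) w = amul a b u (amul a b v w)"
  by (cases u; cases v; cases w) (simp add: amul_def algebra_simps)
lemma amul_add: "amul a b (u + v) w = amul a b u w + amul a b v w"
  by (cases u; cases v; cases w) (simp add: amul_def algebra_simps)
lemma amul_neg: "amul a b (- u) w = - amul a b u w"
  by (cases u; cases w) (simp add: amul_def algebra_simps)
lemma amul_one: "amul a b (1,0) w = w"
  by (cases w) (simp add: amul_def algebra_simps)
lemma amul_zero: "amul a b 0 w = 0"
  by (cases w) (simp add: amul_def algebra_simps zero_prod_def)

lemma rig_solve:
  fixes a b ax bx ay by' :: real
  assumes D: "4*a - b^2 > 0"
  and R: "- amul a b (ax, bx) (- b / (4*a - b^2), - 2 / (4*a - b^2))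
        + amul a b (0,1) (- amul a b (ay, by') (- b / (4*a - b^2), - 2 / (4*a - b^2))) = 0"
  shows "ax = a*by' \<and> bx = b*by' - ay"
proof -
  define w where "w = (- b / (4*a - b^2), - 2 / (4*a - b^2))"
  have Dn: "4*a - b^2 \<noteq> 0" using D by simp
  have ww: "amul a b w (b,2) = (1,0)"
  proof -
    obtain D where D: "D = 4*a - b^2" by simp
    have "D \<noteq> 0" using Dn D by simp
    hence "amul a b (- b / D, - 2 / D) (b,2) = (1,0)" unfolding amul_def
      by (simp add: field_simps D[symmetric] power2_eq_square) (simp add: D power2_eq_square)
    thus ?thesis using D w_def by simp
  qed
  have "- amul a b (ax, bx) w + amul a b (0,1) (- amul a b (ay, by') w)
        = amul a b (- ((ax,bx) + amul a b (0,1) (ay,by'))) w"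
    by (cases w) (simp add: amul_def algebra_simps)
  with R have "amul a b (- ((ax,bx) + amul a b (0,1) (ay,by'))) w = 0" unfolding w_def by simp
  hence "amul a b (amul a b (- ((ax,bx) + amul a b (0,1) (ay,by'))) w) (b,2) = 0"
    by (simp add: amul_zero)
  hence "- ((ax,bx) + amul a b (0,1) (ay,by')) = 0"
    by (simp add: amul_assoc ww amul_comm[of a b _ "(1,0)"] amul_one)
  thus ?thesis by (simp add: amul_def algebra_simps zero_prod_def)
qed
definition hpd :: "(real \<times> real \<Rightarrow> real) \<Rightarrow> real \<times> real \<Rightarrow> real \<Rightarrow> real \<Rightarrow> bool" where
  "hpd f z fx fy \<longleftrightarrow> (f has_derivative (\<lambda>h. fst h * fx + snd h * fy)) (at z)"

lemma hpd_cong: "hpd f z fx fy \<Longrightarrow> fx = fx' \<Longrightarrow> fy = fy' \<Longrightarrow> hpd f z fx' fy'" by simp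

lemma hpd_const: "hpd (\<lambda>w. c) z 0 0"
  unfolding hpd_def by (rule has_derivative_eq_rhs[OF has_derivative_const]) auto
lemma hpd_fst: "hpd fst z 1 0"
  unfolding hpd_def by (rule has_derivative_eq_rhs[OF has_derivative_fst[OF has_derivative_ident]]) auto
lemma hpd_snd: "hpd snd z 0 1"
  unfolding hpd_def by (rule has_derivative_eq_rhs[OF has_derivative_snd[OF has_derivative_ident]]) auto
lemma hpd_add: "hpd f z fx fy \<Longrightarrow> hpd g z gx gy \<Longrightarrow> hpd (\<lambda>w. f w + g w) z (fx + gx) (fy + gy)"
  unfolding hpd_def by (rule has_derivative_eq_rhs, erule (1) has_derivative_add) (auto simp: algebra_simps)
lemma hpd_diff: "hpd f z fx fy \<Longrightarrow> hpd g z gx gy \<Longrightarrow> hpd (\<lambda>w. f w - g w) z (fx - gx) (fy - gy)"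
  unfolding hpd_def by (rule has_derivative_eq_rhs, erule (1) has_derivative_diff) (auto simp: algebra_simps)
lemma hpd_minus: "hpd f z fx fy \<Longrightarrow> hpd (\<lambda>w. - f w) z (- fx) (- fy)"
  unfolding hpd_def by (rule has_derivative_eq_rhs[OF has_derivative_minus]) (auto simp: algebra_simps)
lemma hpd_mult: "hpd f z fx fy \<Longrightarrow> hpd g z gx gy \<Longrightarrow>
   hpd (\<lambda>w. f w * g w) z (fx * g z + f z * gx) (fy * g z + f z * gy)"
  unfolding hpd_def by (rule has_derivative_eq_rhs, erule (1) has_derivative_mult) (auto simp: algebra_simps)
lemma hpd_divide: "hpd f z fx fy \<Longrightarrow> hpd g z gx gy \<Longrightarrow> g z \<noteq> 0 \<Longrightarrow>
   hpd (\<lambda>w. f w / g w) z ((fx * g z - f z * gx) / (g z)^2) ((fy * g z - f z * gy) / (g z)^2)"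
  unfolding hpd_def by (rule has_derivative_eq_rhs, erule (2) has_derivative_divide')
    (auto simp: field_simps power2_eq_square)

lemma hpd_pd: "hpd f z fx fy \<Longrightarrow> pdx f z = fx \<and> pdy f z = fy"
proof -
  assume "hpd f z fx fy"
  hence eq: "(\<lambda>h. fst h * fx + snd h * fy) = frechet_derivative f (at z)"
    unfolding hpd_def by (rule frechet_derivative_at)
  show ?thesis unfolding pdx_def pdy_def eq[symmetric] by simp
qed

lemma hpd_differentiable: "hpd f z fx fy \<Longrightarrow> f differentiable (at z)"
  unfolding hpd_def differentiable_def by blast

lemma hpd_of_diff: "f differentiable (at z) \<Longrightarrow> hpd f z (pdx f z) (pdy f z)"
proof -
  assume "f differentiable (at z)"
  hence d: "(f has_derivative frechet_derivative f (at z)) (at z)" by (rule frechet_derivative_works[THEN iffD1])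
  hence l: "linear (frechet_derivative f (at z))" using has_derivative_linear by blast
  have "frechet_derivative f (at z) h = fst h * pdx f z + snd h * pdy f z" for h
  proof -
    have "h = fst h *\<^sub>R (1,0) + snd h *\<^sub>R (0,1)" by (cases h) simp
    hence "frechet_derivative f (at z) h = frechet_derivative f (at z) (fst h *\<^sub>R (1,0) + snd h *\<^sub>R (0,1))" by simp
    also have "\<dots> = fst h * pdx f z + snd h * pdy f z"
      using l unfolding pdx_def pdy_def unfolding linear_add[OF l] linear_scale[OF l] by simp
    finally show ?thesis .
  qed
  hence "frechet_derivative f (at z) = (\<lambda>h. fst h * pdx f z + snd h * pdy f z)" by (rule ext)
  with d show ?thesis unfolding hpd_def by simp
qed

lemma hpd_transform: "hpd f z fx fy \<Longrightarrow> open S \<Longrightarrow> z \<in> S \<Longrightarrow> (\<And>w. w \<in> S \<Longrightarrow> f w = g w) \<Longrightarrow> hpd g z fx fy"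
  unfolding hpd_def by (rule has_derivative_transform_within_open)
definition NN :: "real \<Rightarrow> real \<Rightarrow> real \<Rightarrow> real \<Rightarrow> real" where
  "NN a b p q = p*p - b*p*q + a*(q*q)"
definition NNx :: "real \<Rightarrow> real \<Rightarrow> real \<Rightarrow> real \<Rightarrow> real \<Rightarrow> real \<Rightarrow> real" where
  "NNx a b ax bx p q = -(bx*p*q) + b*p + ax*(q*q) - 2*a*q"
definition NNy :: "real \<Rightarrow> real \<Rightarrow> real \<Rightarrow> real \<Rightarrow> real \<Rightarrow> real \<Rightarrow> real" where
  "NNy a b ay by' p q = 2*p - by'*p*q - b*q + ay*(q*q)"
definition Uxf where "Uxf a b ax bx p q = ((b - bx*q)*NN a b p q - (p - b*q)*NNx a b ax bx p q)/(NN a b p q)^2"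
definition Uyf where "Uyf a b ay by' p q = ((1 - by'*q)*NN a b p q - (p - b*q)*NNy a b ay by' p q)/(NN a b p q)^2"
definition Vxf where "Vxf a b ax bx p q = (NN a b p q + q*NNx a b ax bx p q)/(NN a b p q)^2"
definition Vyf where "Vyf a b ay by' p q = (q*NNy a b ay by' p q)/(NN a b p q)^2"

lemma core:
  fixes a b ay by' p q :: real
  assumes "NN a b p q \<noteq> 0"
  shows "Uxf a b (a*by') (b*by' - ay) p q - a * Vyf a b ay by' p q = 0"
    and "Vxf a b (a*by') (b*by' - ay) p q + Uyf a b ay by' p q - b * Vyf a b ay by' p q = 0"
  using assms unfolding Uxf_def Uyf_def Vxf_def Vyf_def NNx_def NNy_def
  by (simp_all add: field_simps NN_def power2_eq_square; algebra)+

lemma NN_pos: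
  fixes a b p q :: real
  assumes D: "4*a - b^2 > 0" and nz: "(p,q) \<noteq> (0,0)"
  shows "NN a b p q > 0"
proof -
  have a: "a > 0" using D by (smt (verit) zero_le_power2)
  have id: "4*a*NN a b p q = (2*a*q - b*p)^2 + (4*a - b^2)*p^2"
    unfolding NN_def by (simp add: algebra_simps power2_eq_square)
  show ?thesis
  proof (cases "p = 0")
    case True
    with nz have "q \<noteq> 0" by simp
    with True a show ?thesis unfolding NN_def by (auto simp: zero_less_mult_iff linorder_neq_iff)
  next
    case False
    hence "(4*a - b^2)*p^2 > 0" using D by simp
    hence "4*a*NN a b p q > 0" unfolding id by (smt (verit) zero_le_power2)
    thus ?thesis using a by (simp add: zero_less_mult_iff)
  qed
qed

lemma sol_aux:
  fixes a b p q n :: real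
  assumes "n \<noteq> 0" and "n = p*p - b*p*q + a*(q*q)"
  shows "amul a b (p,q) ((p - b*q)/n, -q/n) = (1,0)"
proof -
  have "amul a b (p,q) ((p - b*q)/n, -q/n) = ((p*p - b*p*q + a*(q*q))/n, 0)"
    using assms(1) unfolding amul_def by (simp add: field_simps)
  also have "\<dots> = (1,0)" using assms by simp
  finally show ?thesis .
qed

lemma ainv_formula:
  fixes a b p q :: real
  assumes N: "NN a b p q \<noteq> 0"
  shows "ainvertible a b (p,q)" and "ainv a b (p,q) = ((p - b*q)/NN a b p q, -q/NN a b p q)"
proof -
  let ?w = "((p - b*q)/NN a b p q, -q/NN a b p q)"
  have sol: "amul a b (p,q) ?w = (1,0)"
    using N by (intro sol_aux) (simp_all add: NN_def)
  have uniq: "w' = ?w" if "amul a b (p,q) w' = (1,0)" for w'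
  proof (cases w')
    case (Pair t0 t1)
    with that have e1: "p*t0 - a*q* t1 = 1" and e2: "p* t1 + q*t0 - b*q* t1 = 0" by (simp_all add: amul_def)
    have "NN a b p q * t0 = (p - b*q)*(p*t0 - a*q* t1) + a*q*(p* t1 + q*t0 - b*q* t1)"
      unfolding NN_def by (simp add: algebra_simps)
    hence t0: "NN a b p q * t0 = p - b*q" using e1 e2 by simp
    have "NN a b p q * t1 = -q*(p*t0 - a*q* t1) + p*(p* t1 + q*t0 - b*q* t1)"
      unfolding NN_def by (simp add: algebra_simps)
    hence t1: "NN a b p q * t1 = -q" using e1 e2 by simp
    show ?thesis using t0 t1 N Pair by (simp add: field_simps)
  qed
  show "ainvertible a b (p,q)" unfolding ainvertible_def using sol by blast
  show "ainv a b (p,q) = ?w" unfolding ainv_def using sol uniq by (rule the_equality)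
qed

lemma amul_scaleR_right: "amul a b u (v + c *\<^sub>R w) = amul a b u v + c *\<^sub>R amul a b u w"
  by (cases u; cases v; cases w) (simp add: amul_def algebra_simps)

lemma hpd_UV:
  fixes \<alpha> \<beta> :: "real \<times> real \<Rightarrow> real" and \<zeta> z :: "real \<times> real"
  defines "P \<equiv> \<lambda>w::real\<times>real. snd w - snd \<zeta>"
    and "Q \<equiv> \<lambda>w::real\<times>real. - (fst w - fst \<zeta>)"
  assumes ha: "hpd \<alpha> z ax ay" and hb: "hpd \<beta> z bx by'"
    and N: "NN (\<alpha> z) (\<beta> z) (P z) (Q z) \<noteq> 0"
  shows "hpd (\<lambda>w. (P w - \<beta> w * Q w) / NN (\<alpha> w) (\<beta> w) (P w) (Q w)) z
           (Uxf (\<alpha> z) (\<beta> z) ax bx (P z) (Q z)) (Uyf (\<alpha> z) (\<beta> z) ay by' (P z) (Q z))"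
    and "hpd (\<lambda>w. - Q w / NN (\<alpha> w) (\<beta> w) (P w) (Q w)) z
           (Vxf (\<alpha> z) (\<beta> z) ax bx (P z) (Q z)) (Vyf (\<alpha> z) (\<beta> z) ay by' (P z) (Q z))"
proof -
  have hP: "hpd P z 0 1" unfolding P_def using hpd_diff[OF hpd_snd hpd_const] by simp
  have hQ: "hpd Q z (-1) 0" unfolding Q_def using hpd_minus[OF hpd_diff[OF hpd_fst hpd_const]] by simp
  have hnum: "hpd (\<lambda>w. P w - \<beta> w * Q w) z (0 - (bx * Q z + \<beta> z * (-1))) (1 - (by' * Q z + \<beta> z * 0))"
    using hpd_diff[OF hP hpd_mult[OF hb hQ]] .
  have hN0: "hpd (\<lambda>w. P w * P w - \<beta> w * P w * Q w + \<alpha> w * (Q w * Q w)) z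
     (0 * P z + P z * 0 - ((bx * P z + \<beta> z * 0) * Q z + \<beta> z * P z * (-1)) + (ax * (Q z * Q z) + \<alpha> z * ((-1) * Q z + Q z * (-1))))
     (1 * P z + P z * 1 - ((by' * P z + \<beta> z * 1) * Q z + \<beta> z * P z * 0) + (ay * (Q z * Q z) + \<alpha> z * (0 * Q z + Q z * 0)))"
    using hpd_add[OF hpd_diff[OF hpd_mult[OF hP hP] hpd_mult[OF hpd_mult[OF hb hP] hQ]] hpd_mult[OF ha hpd_mult[OF hQ hQ]]] .
  have hN: "hpd (\<lambda>w. NN (\<alpha> w) (\<beta> w) (P w) (Q w)) z (NNx (\<alpha> z) (\<beta> z) ax bx (P z) (Q z)) (NNy (\<alpha> z) (\<beta> z) ay by' (P z) (Q z))"
    unfolding NN_def NNx_def NNy_def by (rule hpd_cong[OF hN0]) (simp_all add: algebra_simps)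
  show "hpd (\<lambda>w. (P w - \<beta> w * Q w) / NN (\<alpha> w) (\<beta> w) (P w) (Q w)) z
           (Uxf (\<alpha> z) (\<beta> z) ax bx (P z) (Q z)) (Uyf (\<alpha> z) (\<beta> z) ay by' (P z) (Q z))"
    unfolding Uxf_def Uyf_def by (rule hpd_cong[OF hpd_divide[OF hnum hN N]]) (simp_all add: algebra_simps)
  show "hpd (\<lambda>w. - Q w / NN (\<alpha> w) (\<beta> w) (P w) (Q w)) z
           (Vxf (\<alpha> z) (\<beta> z) ax bx (P z) (Q z)) (Vyf (\<alpha> z) (\<beta> z) ay by' (P z) (Q z))"
    unfolding Vxf_def Vyf_def by (rule hpd_cong[OF hpd_divide[OF hpd_minus[OF hQ] hN N]]) (simp_all add: algebra_simps)
qed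

theorem lemma5p5:
  fixes \<Omega> :: "(real \<times> real) set" and \<alpha> \<beta> :: "real \<times> real \<Rightarrow> real" and \<zeta> :: "real \<times> real"
  assumes "open \<Omega>"
    and "C1_on \<Omega> \<alpha>" and "C1_on \<Omega> \<beta>"
    and "\<forall>z\<in>\<Omega>. 4 * \<alpha> z - (\<beta> z)^2 > 0"
    and "rigid \<Omega> \<alpha> \<beta>"
    and "\<zeta> \<in> \<Omega>"
  shows "(\<forall>z\<in>\<Omega> - {\<zeta>}. ainvertible (\<alpha> z) (\<beta> z) (Zker \<zeta> z))
    \<and> C1_section_on (\<Omega> - {\<zeta>}) (\<lambda>z. ainv (\<alpha> z) (\<beta> z) (Zker \<zeta> z))
    \<and> (\<forall>z\<in>\<Omega> - {\<zeta>}. sdzbar \<alpha> \<beta> (\<lambda>w. ainv (\<alpha> w) (\<beta> w) (Zker \<zeta> w)) z = 0)"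
proof -
  define S where "S = \<Omega> - {\<zeta>}"
  define P where "P = (\<lambda>w::real\<times>real. snd w - snd \<zeta>)"
  define Q where "Q = (\<lambda>w::real\<times>real. - (fst w - fst \<zeta>))"
  define f where "f = (\<lambda>w. ainv (\<alpha> w) (\<beta> w) (Zker \<zeta> w))"
  define U where "U = (\<lambda>w. (P w - \<beta> w * Q w) / NN (\<alpha> w) (\<beta> w) (P w) (Q w))"
  define V where "V = (\<lambda>w. - Q w / NN (\<alpha> w) (\<beta> w) (P w) (Q w))"
  have oS: "open S" unfolding S_def using assms(1) by (simp add: open_Diff)
  have SO: "S \<subseteq> \<Omega>" unfolding S_def by auto
  have Zk: "Zker \<zeta> w = (P w, Q w)" for w unfolding Zker_def P_def Q_def by simp
  have Npos: "NN (\<alpha> w) (\<beta> w) (P w) (Q w) > 0" if "w \<in> S" for w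
  proof (rule NN_pos)
    show "4 * \<alpha> w - (\<beta> w)^2 > 0" using assms(4) that SO by auto
    show "(P w, Q w) \<noteq> (0,0)" using that unfolding S_def P_def Q_def
      by (cases w, cases \<zeta>) auto
  qed
  have Nne: "NN (\<alpha> w) (\<beta> w) (P w) (Q w) \<noteq> 0" if "w \<in> S" for w using Npos[OF that] by simp
  have finv: "f w = (U w, V w)" if "w \<in> S" for w
    unfolding f_def U_def V_def Zk using ainv_formula(2)[OF Nne[OF that]] by simp
  have part1: "\<forall>z\<in>S. ainvertible (\<alpha> z) (\<beta> z) (Zker \<zeta> z)"
    unfolding Zk using ainv_formula(1)[OF Nne] by blast
  have da: "\<alpha> differentiable (at w)" "\<beta> differentiable (at w)" if "w \<in> \<Omega>" for w
    using assms(2,3) that unfolding C1_on_def by auto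
  have ha: "hpd \<alpha> w (pdx \<alpha> w) (pdy \<alpha> w)" "hpd \<beta> w (pdx \<beta> w) (pdy \<beta> w)" if "w \<in> \<Omega>" for w
    using hpd_of_diff da that by auto
  have hU: "hpd (\<lambda>w. fst (f w)) w
           (Uxf (\<alpha> w) (\<beta> w) (pdx \<alpha> w) (pdx \<beta> w) (P w) (Q w)) (Uyf (\<alpha> w) (\<beta> w) (pdy \<alpha> w) (pdy \<beta> w) (P w) (Q w))"
    if "w \<in> S" for w
  proof (rule hpd_transform[OF _ oS that])
    show "hpd U w (Uxf (\<alpha> w) (\<beta> w) (pdx \<alpha> w) (pdx \<beta> w) (P w) (Q w)) (Uyf (\<alpha> w) (\<beta> w) (pdy \<alpha> w) (pdy \<beta> w) (P w) (Q w))"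
      unfolding U_def P_def Q_def
      using hpd_UV(1)[OF ha[OF SO[THEN subsetD, OF that]], of \<zeta>] Nne[OF that] unfolding P_def Q_def by simp
    show "U v = fst (f v)" if "v \<in> S" for v using finv[OF that] by simp
  qed
  have hV: "hpd (\<lambda>w. snd (f w)) w
           (Vxf (\<alpha> w) (\<beta> w) (pdx \<alpha> w) (pdx \<beta> w) (P w) (Q w)) (Vyf (\<alpha> w) (\<beta> w) (pdy \<alpha> w) (pdy \<beta> w) (P w) (Q w))"
    if "w \<in> S" for w
  proof (rule hpd_transform[OF _ oS that])
    show "hpd V w (Vxf (\<alpha> w) (\<beta> w) (pdx \<alpha> w) (pdx \<beta> w) (P w) (Q w)) (Vyf (\<alpha> w) (\<beta> w) (pdy \<alpha> w) (pdy \<beta> w) (P w) (Q w))"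
      unfolding V_def P_def Q_def
      using hpd_UV(2)[OF ha[OF SO[THEN subsetD, OF that]], of \<zeta>] Nne[OF that] unfolding P_def Q_def by simp
    show "V v = snd (f v)" if "v \<in> S" for v using finv[OF that] by simp
  qed
  have contab: "continuous_on S \<alpha>" "continuous_on S \<beta>"
    "continuous_on S (pdx \<alpha>)" "continuous_on S (pdy \<alpha>)" "continuous_on S (pdx \<beta>)" "continuous_on S (pdy \<beta>)"
  proof -
    show "continuous_on S \<alpha>" "continuous_on S \<beta>"
      using da SO by (auto intro!: continuous_at_imp_continuous_on differentiable_imp_continuous_within)
    show "continuous_on S (pdx \<alpha>)" "continuous_on S (pdy \<alpha>)" "continuous_on S (pdx \<beta>)" "continuous_on S (pdy \<beta>)"
      using assms(2,3) SO unfolding C1_on_def by (auto intro: continuous_on_subset)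
  qed
  have contPQ: "continuous_on S P" "continuous_on S Q" unfolding P_def Q_def by (auto intro!: continuous_intros)
  have NNc: "\<forall>w\<in>S. P w * P w - \<beta> w * P w * Q w + \<alpha> w * (Q w * Q w) \<noteq> 0"
    using Nne unfolding NN_def by auto
  have NNc2: "\<forall>w\<in>S. (P w * P w - \<beta> w * P w * Q w + \<alpha> w * (Q w * Q w))^2 \<noteq> 0"
    using NNc by auto
  have part2: "C1_section_on S f"
    unfolding C1_section_on_def C1_on_def
  proof (intro conjI ballI)
    fix w assume "w \<in> S"
    show "(\<lambda>z. fst (f z)) differentiable at w" "(\<lambda>z. snd (f z)) differentiable at w"
      using hU[OF \<open>w \<in> S\<close>] hV[OF \<open>w \<in> S\<close>] by (auto intro: hpd_differentiable)
  next
    have e: "\<And>w. w \<in> S \<Longrightarrow> pdx (\<lambda>z. fst (f z)) w = Uxf (\<alpha> w) (\<beta> w) (pdx \<alpha> w) (pdx \<beta> w) (P w) (Q w)"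
            "\<And>w. w \<in> S \<Longrightarrow> pdy (\<lambda>z. fst (f z)) w = Uyf (\<alpha> w) (\<beta> w) (pdy \<alpha> w) (pdy \<beta> w) (P w) (Q w)"
            "\<And>w. w \<in> S \<Longrightarrow> pdx (\<lambda>z. snd (f z)) w = Vxf (\<alpha> w) (\<beta> w) (pdx \<alpha> w) (pdx \<beta> w) (P w) (Q w)"
            "\<And>w. w \<in> S \<Longrightarrow> pdy (\<lambda>z. snd (f z)) w = Vyf (\<alpha> w) (\<beta> w) (pdy \<alpha> w) (pdy \<beta> w) (P w) (Q w)"
      using hpd_pd[OF hU] hpd_pd[OF hV] by auto
    show "continuous_on S (pdx (\<lambda>z. fst (f z)))"
      by (rule continuous_on_cong[THEN iffD2, OF refl e(1)]) (simp_all add: Uxf_def NNx_def NN_def,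
        intro continuous_intros contab contPQ NNc2)
    show "continuous_on S (pdy (\<lambda>z. fst (f z)))"
      by (rule continuous_on_cong[THEN iffD2, OF refl e(2)]) (simp_all add: Uyf_def NNy_def NN_def,
        intro continuous_intros contab contPQ NNc2)
    show "continuous_on S (pdx (\<lambda>z. snd (f z)))"
      by (rule continuous_on_cong[THEN iffD2, OF refl e(3)]) (simp_all add: Vxf_def NNx_def NN_def,
        intro continuous_intros contab contPQ NNc2)
    show "continuous_on S (pdy (\<lambda>z. snd (f z)))"
      by (rule continuous_on_cong[THEN iffD2, OF refl e(4)]) (simp_all add: Vyf_def NNy_def NN_def,
        intro continuous_intros contab contPQ NNc2)
  qed
  have part3: "sdzbar \<alpha> \<beta> f w = 0" if w: "w \<in> S" for w
  proof -
    have wO: "w \<in> \<Omega>" using w SO by auto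
    define a where "a = \<alpha> w"
    define b where "b = \<beta> w"
    have R: "gen_x \<alpha> \<beta> w + amul a b (0, 1) (gen_y \<alpha> \<beta> w) = 0"
      using assms(5) wO unfolding rigid_def a_def b_def by auto
    have rs: "pdx \<alpha> w = a * pdy \<beta> w \<and> pdx \<beta> w = b * pdy \<beta> w - pdy \<alpha> w"
      using rig_solve[of a b "pdx \<alpha> w" "pdx \<beta> w" "pdy \<alpha> w" "pdy \<beta> w"] R assms(4) wO
      unfolding gen_x_def gen_y_def inv2ib_def a_def b_def by auto
    have px: "sdx \<alpha> \<beta> f w = (Uxf a b (pdx \<alpha> w) (pdx \<beta> w) (P w) (Q w), Vxf a b (pdx \<alpha> w) (pdx \<beta> w) (P w) (Q w))
                + snd (f w) *\<^sub>R gen_x \<alpha> \<beta> w"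
      unfolding sdx_def a_def b_def using hpd_pd[OF hU[OF w]] hpd_pd[OF hV[OF w]] by simp
    have py: "sdy \<alpha> \<beta> f w = (Uyf a b (pdy \<alpha> w) (pdy \<beta> w) (P w) (Q w), Vyf a b (pdy \<alpha> w) (pdy \<beta> w) (P w) (Q w))
                + snd (f w) *\<^sub>R gen_y \<alpha> \<beta> w"
      unfolding sdy_def a_def b_def using hpd_pd[OF hU[OF w]] hpd_pd[OF hV[OF w]] by simp
    have "sdx \<alpha> \<beta> f w + amul a b (0,1) (sdy \<alpha> \<beta> f w)
        = (Uxf a b (pdx \<alpha> w) (pdx \<beta> w) (P w) (Q w), Vxf a b (pdx \<alpha> w) (pdx \<beta> w) (P w) (Q w))
          + amul a b (0,1) (Uyf a b (pdy \<alpha> w) (pdy \<beta> w) (P w) (Q w), Vyf a b (pdy \<alpha> w) (pdy \<beta> w) (P w) (Q w))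
          + snd (f w) *\<^sub>R (gen_x \<alpha> \<beta> w + amul a b (0, 1) (gen_y \<alpha> \<beta> w))"
      unfolding px py amul_scaleR_right by (simp add: algebra_simps scaleR_right_distrib)
    also have "\<dots> = (Uxf a b (pdx \<alpha> w) (pdx \<beta> w) (P w) (Q w), Vxf a b (pdx \<alpha> w) (pdx \<beta> w) (P w) (Q w))
          + amul a b (0,1) (Uyf a b (pdy \<alpha> w) (pdy \<beta> w) (P w) (Q w), Vyf a b (pdy \<alpha> w) (pdy \<beta> w) (P w) (Q w))"
      using R by simp
    also have "\<dots> = 0"
      using core[OF Nne[OF w, folded a_def b_def], where ay = "pdy \<alpha> w" and by' = "pdy \<beta> w"]
      unfolding conjunct1[OF rs] conjunct2[OF rs]
      by (simp add: amul_def zero_prod_def algebra_simps)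
    finally show ?thesis unfolding sdzbar_def a_def b_def by simp
  qed
  show ?thesis using part1 part2 part3 unfolding S_def f_def by blast
qed

end
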